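(* Let $P\in\Delta$ be such that, under $P$, $Y$ and $Z$ are conditionally independent given $X$, and $Y$ and $Z$ are (unconditionally) independent. Then $\widetilde{SI}(X:Y;Z)=0$.
   Context: $X,Y,Z$ are random variables with finite state spaces $\mathcal X,\mathcal Y,\mathcal Z$. $\Delta$ denotes the set of all probability distributions on $\mathcal X\times\mathcal Y\times\mathcal Z$; $P\in\Delta$ is the joint distribution, and a subscript $Q$ means computed w.r.t. $Q\in\Delta$. $\Delta_P=\{Q\in\Delta: Q(X=x,Y=y)=P(X=x,Y=y)\text{ and }Q(X=x,Z=z)=P(X=x,Z=z)\ \forall x,y,z\}$. $CoI_Q(X;Y;Z)=MI_Q(X:Y)-MI_Q(X:Y|Z)$ and $\widetilde{SI}(X:Y;Z)=\max_{Q\in\Delta_P}CoI_Q(X;Y;Z)$. *)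

theory Defs
  imports Complex_Main
begin

definition is_dist :: "('x::finite \<Rightarrow> 'y::finite \<Rightarrow> 'z::finite \<Rightarrow> real) \<Rightarrow> bool" where
  "is_dist Q \<longleftrightarrow> (\<forall>x y z. 0 \<le> Q x y z) \<and> (\<Sum>x\<in>UNIV. \<Sum>y\<in>UNIV. \<Sum>z\<in>UNIV. Q x y z) = 1"

definition mXY :: "('x::finite \<Rightarrow> 'y::finite \<Rightarrow> 'z::finite \<Rightarrow> real) \<Rightarrow> 'x \<Rightarrow> 'y \<Rightarrow> real" where
  "mXY Q x y = (\<Sum>z\<in>UNIV. Q x y z)"
definition mXZ :: "('x::finite \<Rightarrow> 'y::finite \<Rightarrow> 'z::finite \<Rightarrow> real) \<Rightarrow> 'x \<Rightarrow> 'z \<Rightarrow> real" where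
  "mXZ Q x z = (\<Sum>y\<in>UNIV. Q x y z)"
definition mYZ :: "('x::finite \<Rightarrow> 'y::finite \<Rightarrow> 'z::finite \<Rightarrow> real) \<Rightarrow> 'y \<Rightarrow> 'z \<Rightarrow> real" where
  "mYZ Q y z = (\<Sum>x\<in>UNIV. Q x y z)"
definition mX :: "('x::finite \<Rightarrow> 'y::finite \<Rightarrow> 'z::finite \<Rightarrow> real) \<Rightarrow> 'x \<Rightarrow> real" where
  "mX Q x = (\<Sum>y\<in>UNIV. \<Sum>z\<in>UNIV. Q x y z)"
definition mY :: "('x::finite \<Rightarrow> 'y::finite \<Rightarrow> 'z::finite \<Rightarrow> real) \<Rightarrow> 'y \<Rightarrow> real" where
  "mY Q y = (\<Sum>x\<in>UNIV. \<Sum>z\<in>UNIV. Q x y z)"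
definition mZ :: "('x::finite \<Rightarrow> 'y::finite \<Rightarrow> 'z::finite \<Rightarrow> real) \<Rightarrow> 'z \<Rightarrow> real" where
  "mZ Q z = (\<Sum>x\<in>UNIV. \<Sum>y\<in>UNIV. Q x y z)"

definition MI_XY :: "('x::finite \<Rightarrow> 'y::finite \<Rightarrow> 'z::finite \<Rightarrow> real) \<Rightarrow> real" where
  "MI_XY Q = (\<Sum>x\<in>UNIV. \<Sum>y\<in>UNIV.
     if mXY Q x y = 0 then 0
     else mXY Q x y * log 2 (mXY Q x y / (mX Q x * mY Q y)))"

definition CMI_XY_Z :: "('x::finite \<Rightarrow> 'y::finite \<Rightarrow> 'z::finite \<Rightarrow> real) \<Rightarrow> real" where
  "CMI_XY_Z Q = (\<Sum>x\<in>UNIV. \<Sum>y\<in>UNIV. \<Sum>z\<in>UNIV.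
     if Q x y z = 0 then 0
     else Q x y z * log 2 ((Q x y z * mZ Q z) / (mXZ Q x z * mYZ Q y z)))"

definition CoI :: "('x::finite \<Rightarrow> 'y::finite \<Rightarrow> 'z::finite \<Rightarrow> real) \<Rightarrow> real" where
  "CoI Q = MI_XY Q - CMI_XY_Z Q"

definition Delta_P :: "('x::finite \<Rightarrow> 'y::finite \<Rightarrow> 'z::finite \<Rightarrow> real) \<Rightarrow> ('x \<Rightarrow> 'y \<Rightarrow> 'z \<Rightarrow> real) set" where
  "Delta_P P = {Q. is_dist Q \<and> (\<forall>x y. mXY Q x y = mXY P x y) \<and> (\<forall>x z. mXZ Q x z = mXZ P x z)}"

text \<open>SI~(X:Y;Z) = max over Delta_P of CoI (the maximum is attained by compactness,
  so it coincides with the supremum).\<close>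
definition SI_tilde :: "('x::finite \<Rightarrow> 'y::finite \<Rightarrow> 'z::finite \<Rightarrow> real) \<Rightarrow> real" where
  "SI_tilde P = Sup (CoI ` Delta_P P)"

definition cond_indep_YZ_X :: "('x::finite \<Rightarrow> 'y::finite \<Rightarrow> 'z::finite \<Rightarrow> real) \<Rightarrow> bool" where
  "cond_indep_YZ_X Q \<longleftrightarrow> (\<forall>x y z. Q x y z * mX Q x = mXY Q x y * mXZ Q x z)"
definition indep_YZ :: "('x::finite \<Rightarrow> 'y::finite \<Rightarrow> 'z::finite \<Rightarrow> real) \<Rightarrow> bool" where
  "indep_YZ Q \<longleftrightarrow> (\<forall>y z. mYZ Q y z = mY Q y * mZ Q z)"

end

theory Submission
  imports Defs
begin

lemma nn_le_sum: "(\<And>i. (0::real) \<le> f i) \<Longrightarrow> f (a::'a::finite) \<le> (\<Sum>i\<in>UNIV. f i)"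
  by (rule member_le_sum) auto

lemma CoI_eq:
  fixes P Q :: "'x::finite \<Rightarrow> 'y::finite \<Rightarrow> 'z::finite \<Rightarrow> real"
  assumes "cond_indep_YZ_X P" and "indep_YZ P" and Q: "Q \<in> Delta_P P"
  shows "CoI Q = (\<Sum>x\<in>UNIV. \<Sum>y\<in>UNIV. \<Sum>z\<in>UNIV. if Q x y z = 0 then 0
     else Q x y z * log 2 (P x y z * mYZ Q y z / (Q x y z * mYZ P y z)))"
proof -
  have dQ: "is_dist Q" and eXY: "\<And>x y. mXY Q x y = mXY P x y" and eXZ: "\<And>x z. mXZ Q x z = mXZ P x z"
    using Q by (auto simp: Delta_P_def)
  have nn: "\<And>x y z. 0 \<le> Q x y z" using dQ by (auto simp: is_dist_def)
  have eX: "\<And>x. mX Q x = mX P x"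
    using eXY by (simp add: mX_def mXY_def[symmetric])
  have eY: "\<And>y. mY Q y = mY P y"
    using eXY by (simp add: mY_def mXY_def[symmetric])
  have eZ: "\<And>z. mZ Q z = mZ P z"
  proof -
    fix z
    have "mZ Q z = (\<Sum>x\<in>UNIV. mXZ Q x z)" by (simp add: mZ_def mXZ_def)
    also have "\<dots> = (\<Sum>x\<in>UNIV. mXZ P x z)" using eXZ by simp
    also have "\<dots> = mZ P z" by (simp add: mZ_def mXZ_def)
    finally show "mZ Q z = mZ P z" .
  qed
  have MI: "MI_XY Q = (\<Sum>x\<in>UNIV. \<Sum>y\<in>UNIV. \<Sum>z\<in>UNIV. if Q x y z = 0 then 0
     else Q x y z * log 2 (mXY Q x y / (mX Q x * mY Q y)))"
    unfolding MI_XY_def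
  proof (intro sum.cong refl)
    fix x y
    show "(if mXY Q x y = 0 then 0 else mXY Q x y * log 2 (mXY Q x y / (mX Q x * mY Q y))) =
      (\<Sum>z\<in>UNIV. if Q x y z = 0 then 0 else Q x y z * log 2 (mXY Q x y / (mX Q x * mY Q y)))"
    proof (cases "mXY Q x y = 0")
      case True
      then have "\<forall>z\<in>UNIV. Q x y z = 0" unfolding mXY_def
        using sum_nonneg_eq_0_iff[of UNIV "Q x y"] nn by auto
      then show ?thesis using True by simp
    next
      case False
      have "mXY Q x y * log 2 (mXY Q x y / (mX Q x * mY Q y)) =
        (\<Sum>z\<in>UNIV. Q x y z * log 2 (mXY Q x y / (mX Q x * mY Q y)))"
        unfolding mXY_def by (simp add: sum_distrib_right)
      also have "\<dots> = (\<Sum>z\<in>UNIV. if Q x y z = 0 then 0 else Q x y z * log 2 (mXY Q x y / (mX Q x * mY Q y)))"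
        by (intro sum.cong) auto
      finally show ?thesis using False by simp
    qed
  qed
  show ?thesis
    unfolding CoI_def MI CMI_XY_Z_def sum_subtractf[symmetric]
  proof (intro sum.cong refl)
    fix x y z
    show "(if Q x y z = 0 then 0 else Q x y z * log 2 (mXY Q x y / (mX Q x * mY Q y))) -
        (if Q x y z = 0 then 0 else Q x y z * log 2 (Q x y z * mZ Q z / (mXZ Q x z * mYZ Q y z))) =
        (if Q x y z = 0 then 0 else Q x y z * log 2 (P x y z * mYZ Q y z / (Q x y z * mYZ P y z)))"
    proof (cases "Q x y z = 0")
      case True then show ?thesis by simp
    next
      case False
      then have q: "Q x y z > 0" using nn[of x y z] by simp
      have a1: "mXY Q x y \<ge> Q x y z" unfolding mXY_def by (rule nn_le_sum) (rule nn)
      have a2: "mXZ Q x z \<ge> Q x y z" unfolding mXZ_def by (rule nn_le_sum[where f="\<lambda>y. Q x y z"]) (rule nn)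
      have a3: "mYZ Q y z \<ge> Q x y z" unfolding mYZ_def by (rule nn_le_sum[where f="\<lambda>x. Q x y z"]) (rule nn)
      have nXY: "\<And>x y. 0 \<le> mXY Q x y" unfolding mXY_def by (intro sum_nonneg) (rule nn)
      have nXZ: "\<And>x z. 0 \<le> mXZ Q x z" unfolding mXZ_def by (intro sum_nonneg) (rule nn)
      have a4: "mX Q x \<ge> mXY Q x y" unfolding mX_def mXY_def[symmetric]
        by (rule nn_le_sum) (rule nXY)
      have a5: "mY Q y \<ge> mXY Q x y"
        by (simp add: mY_def mXY_def[symmetric]) (rule nn_le_sum[where f="\<lambda>x. mXY Q x y"], rule nXY)
      have a6: "mZ Q z \<ge> mXZ Q x z"
      proof -
        have "mZ Q z = (\<Sum>x\<in>UNIV. mXZ Q x z)" by (simp add: mZ_def mXZ_def)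
        moreover have "mXZ Q x z \<le> (\<Sum>x\<in>UNIV. mXZ Q x z)"
          by (rule nn_le_sum[where f="\<lambda>x. mXZ Q x z"]) (rule nXZ)
        ultimately show ?thesis by simp
      qed
      have pXY: "mXY Q x y > 0" and pXZ: "mXZ Q x z > 0" and pYZ: "mYZ Q y z > 0"
        and pX: "mX Q x > 0" and pY: "mY Q y > 0" and pZ: "mZ Q z > 0"
        using q a1 a2 a3 a4 a5 a6 by linarith+
      have ci: "P x y z * mX P x = mXY P x y * mXZ P x z"
        using assms(1) by (simp add: cond_indep_YZ_X_def)
      have iyz: "mYZ P y z = mY P y * mZ P z" using assms(2) by (simp add: indep_YZ_def)
      have r: "(mXY Q x y / (mX Q x * mY Q y)) / (Q x y z * mZ Q z / (mXZ Q x z * mYZ Q y z))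
          = P x y z * mYZ Q y z / (Q x y z * mYZ P y z)"
      proof -
        have "(mXY Q x y / (mX Q x * mY Q y)) / (Q x y z * mZ Q z / (mXZ Q x z * mYZ Q y z))
          = (mXY Q x y * mXZ Q x z) * mYZ Q y z / (mX Q x * (Q x y z * (mY Q y * mZ Q z)))"
          using pXY pXZ pYZ pX pY pZ q by (simp add: field_simps)
        also have "\<dots> = (P x y z * mX P x) * mYZ Q y z / (mX P x * (Q x y z * mYZ P y z))"
          using ci iyz eXY eXZ eX eY eZ by simp
        also have "\<dots> = P x y z * mYZ Q y z / (Q x y z * mYZ P y z)"
          using pX eX by simp
        finally show ?thesis .
      qed
      have "log 2 (mXY Q x y / (mX Q x * mY Q y)) - log 2 (Q x y z * mZ Q z / (mXZ Q x z * mYZ Q y z))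
         = log 2 ((mXY Q x y / (mX Q x * mY Q y)) / (Q x y z * mZ Q z / (mXZ Q x z * mYZ Q y z)))"
        using pXY pXZ pYZ pX pY pZ q by (intro log_divide_pos[symmetric]) auto
      then show ?thesis using False r by (simp add: right_diff_distrib[symmetric])
    qed
  qed
qed

theorem mainTheorem7:
  fixes P :: "'x::finite \<Rightarrow> 'y::finite \<Rightarrow> 'z::finite \<Rightarrow> real"
  assumes "is_dist P"
    and "cond_indep_YZ_X P"
    and "indep_YZ P"
  shows "SI_tilde P = 0"
proof -
  have PD: "P \<in> Delta_P P" using assms(1) by (simp add: Delta_P_def)
  have nnP: "\<And>x y z. 0 \<le> P x y z" using assms(1) by (auto simp: is_dist_def)
  have P0: "CoI P = 0"
  proof -
    have "CoI P = (\<Sum>x\<in>UNIV. \<Sum>y\<in>UNIV. \<Sum>z\<in>UNIV. if P x y z = 0 then 0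
     else P x y z * log 2 (P x y z * mYZ P y z / (P x y z * mYZ P y z)))"
      by (rule CoI_eq[OF assms(2,3) PD])
    also have "\<dots> = 0"
    proof (intro sum.neutral ballI)
      fix x y z
      show "(if P x y z = 0 then 0 else P x y z * log 2 (P x y z * mYZ P y z / (P x y z * mYZ P y z))) = 0"
      proof (cases "P x y z = 0")
        case False
        have "mYZ P y z \<ge> P x y z" unfolding mYZ_def by (rule nn_le_sum[where f="\<lambda>x. P x y z"]) (rule nnP)
        then have "mYZ P y z \<noteq> 0" using False nnP[of x y z] by linarith
        then show ?thesis using False by simp
      qed simp
    qed
    finally show ?thesis .
  qed
  have le: "CoI Q \<le> 0" if Q: "Q \<in> Delta_P P" for Q
  proof -
    have dQ: "is_dist Q" and eXY: "\<And>x y. mXY Q x y = mXY P x y"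
      using Q by (auto simp: Delta_P_def)
    have nn: "\<And>x y z. 0 \<le> Q x y z" using dQ by (auto simp: is_dist_def)
    have eY: "\<And>y. mY Q y = mY P y"
      using eXY by (simp add: mY_def mXY_def[symmetric])
    have l2: "ln 2 > (0::real)" by simp
    define T where "T x y z = (if mYZ P y z = 0 then 0 else P x y z * mYZ Q y z / mYZ P y z)" for x y z
    have trm: "(if Q x y z = 0 then 0
     else Q x y z * log 2 (P x y z * mYZ Q y z / (Q x y z * mYZ P y z))) \<le> (T x y z - Q x y z) / ln 2"
      for x y z
    proof (cases "Q x y z = 0")
      case True
      have "0 \<le> T x y z" unfolding T_def using nnP[of x y z]
        by (auto intro!: divide_nonneg_nonneg mult_nonneg_nonneg simp: mYZ_def sum_nonneg nn nnP)
      then show ?thesis using True l2 by simp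
    next
      case False
      then have q: "Q x y z > 0" using nn[of x y z] by simp
      have a3: "mYZ Q y z \<ge> Q x y z" unfolding mYZ_def by (rule nn_le_sum[where f="\<lambda>x. Q x y z"]) (rule nn)
      have a1: "mXY Q x y \<ge> Q x y z" unfolding mXY_def by (rule nn_le_sum) (rule nn)
      have nXY: "\<And>x y. 0 \<le> mXY Q x y" unfolding mXY_def by (intro sum_nonneg) (rule nn)
      have nXZ: "\<And>x z. 0 \<le> mXZ P x z" unfolding mXZ_def by (intro sum_nonneg) (rule nnP)
      have a5: "mY Q y \<ge> mXY Q x y"
        by (simp add: mY_def mXY_def[symmetric]) (rule nn_le_sum[where f="\<lambda>x. mXY Q x y"], rule nXY)
      have pY: "mY P y > 0" using a1 a5 eY q by (metis order.strict_trans2)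
      have eXZ: "\<And>x z. mXZ Q x z = mXZ P x z" using Q by (auto simp: Delta_P_def)
      have a2: "mXZ Q x z \<ge> Q x y z" unfolding mXZ_def by (rule nn_le_sum[where f="\<lambda>y. Q x y z"]) (rule nn)
      have a6: "mZ P z \<ge> mXZ P x z"
      proof -
        have "mZ P z = (\<Sum>x\<in>UNIV. mXZ P x z)" by (simp add: mZ_def mXZ_def)
        moreover have "mXZ P x z \<le> (\<Sum>x\<in>UNIV. mXZ P x z)"
          by (rule nn_le_sum[where f="\<lambda>x. mXZ P x z"]) (rule nXZ)
        ultimately show ?thesis by simp
      qed
      have pZ: "mZ P z > 0" using a2 a6 eXZ q by (metis order.strict_trans2)
      have iyz: "mYZ P y z = mY P y * mZ P z" using assms(3) by (simp add: indep_YZ_def)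
      have pYZ: "mYZ P y z > 0" using iyz pY pZ by simp
      have pP: "P x y z > 0"
      proof -
        have ci: "P x y z * mX P x = mXY P x y * mXZ P x z"
          using assms(2) by (simp add: cond_indep_YZ_X_def)
        have "mXY P x y > 0" "mXZ P x z > 0" using a1 a2 eXY eXZ q by (metis order.strict_trans2)+
        then have "P x y z * mX P x > 0" using ci by simp
        then show ?thesis using nnP[of x y z] by (metis mult_eq_0_iff order_le_less mult_zero_left less_irrefl)
      qed
      define t where "t = P x y z * mYZ Q y z / (Q x y z * mYZ P y z)"
      have tp: "t > 0" unfolding t_def using pP q pYZ a3 by simp
      have "log 2 t \<le> (t - 1) / ln 2"
        unfolding log_def using ln_le_minus_one[OF tp] l2 by (simp add: divide_right_mono)
      then have "Q x y z * log 2 t \<le> Q x y z * ((t - 1) / ln 2)"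
        using q by (metis mult_left_mono less_imp_le times_divide_eq_right)
      also have "Q x y z * ((t - 1) / ln 2) = (T x y z - Q x y z) / ln 2"
        unfolding t_def T_def using q pYZ by (simp add: field_simps)
      finally show ?thesis using False unfolding t_def by simp
    qed
    have "CoI Q \<le> (\<Sum>x\<in>UNIV. \<Sum>y\<in>UNIV. \<Sum>z\<in>UNIV. (T x y z - Q x y z) / ln 2)"
      unfolding CoI_eq[OF assms(2,3) Q] by (intro sum_mono trm)
    also have "\<dots> = ((\<Sum>x\<in>UNIV. \<Sum>y\<in>UNIV. \<Sum>z\<in>UNIV. T x y z) - 1) / ln 2"
      using dQ by (simp add: is_dist_def sum_divide_distrib[symmetric] sum_subtractf)
    also have "\<dots> \<le> 0"
    proof -
      have "(\<Sum>x\<in>UNIV. \<Sum>y\<in>UNIV. \<Sum>z\<in>UNIV. T x y z) = (\<Sum>y\<in>UNIV. \<Sum>z\<in>UNIV. \<Sum>x\<in>UNIV. T x y z)"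
        by (simp add: sum.swap[of _ "UNIV::'x set"])
      also have "\<dots> \<le> (\<Sum>y\<in>UNIV. \<Sum>z\<in>UNIV. mYZ Q y z)"
      proof (intro sum_mono)
        fix y z
        show "(\<Sum>x\<in>UNIV. T x y z) \<le> mYZ Q y z"
        proof (cases "mYZ P y z = 0")
          case True then show ?thesis by (simp add: T_def mYZ_def sum_nonneg nn)
        next
          case False
          have "(\<Sum>x\<in>UNIV. T x y z) = mYZ P y z * mYZ Q y z / mYZ P y z"
            using False unfolding T_def by (simp add: mYZ_def sum_distrib_right sum_divide_distrib)
          then show ?thesis using False by simp
        qed
      qed
      also have "\<dots> = 1" using dQ unfolding is_dist_def mYZ_def
        by (simp add: sum.swap[of _ "UNIV::'x set"])
      finally show ?thesis using l2 by (simp add: divide_nonpos_pos)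
    qed
    finally show ?thesis .
  qed
  have "Sup (CoI ` Delta_P P) = 0"
  proof (rule cSup_eq_maximum)
    show "0 \<in> CoI ` Delta_P P" using PD P0 by force
    show "\<And>y. y \<in> CoI ` Delta_P P \<Longrightarrow> y \<le> 0" using le by blast
  qed
  then show ?thesis by (simp add: SI_tilde_def)
qed

end
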